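(* Let $d \geq 4$ be an integer and for a positive integer $m$ let $\omega_m := e^{2\pi i/m}$. Define vectors in $\mathbb{C}^d$ by $$v_1 := \Big(\tfrac{1}{\sqrt 2}, \tfrac{1}{\sqrt{2d-2}}, \ldots, \tfrac{1}{\sqrt{2d-2}}\Big)^T,\qquad v_2 := \Big(\tfrac{1}{\sqrt 2}, \tfrac{-1}{\sqrt{2d-2}}, \ldots, \tfrac{-1}{\sqrt{2d-2}}\Big)^T,$$ and, for $j = 1, \ldots, d-2$, $$v_{j+2} := \tfrac{1}{\sqrt{d-1}}\big(0, \omega_{d-1}^{0}, \omega_{d-1}^{j}, \omega_{d-1}^{2j}, \ldots, \omega_{d-1}^{(d-2)j}\big)^T.$$ Set $\lambda_1 := 1$, $\lambda_2 := -1$, $\lambda_{j+2} := \omega_{d-2}^j$ for $j = 1,\ldots,d-2$, and $U := \sum_{j=1}^d \lambda_j v_j v_j^*$. Then $U$ is a unitary $d\times d$ matrix, every diagonal entry of $U$ equals $0$, and every off-diagonal entry of $U$ is nonzero. *)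

theory Defs
  imports "HOL-Analysis.Analysis" "Jordan_Normal_Form.Matrix"
begin

definition omega :: "nat \<Rightarrow> complex" where
  "omega m = exp (2 * pi * \<i> / of_nat m)"

definition cadj :: "complex mat \<Rightarrow> complex mat" where
  "cadj A = mat (dim_col A) (dim_row A) (\<lambda>(i,j). cnj (A $$ (j,i)))"

definition unitary_mat :: "nat \<Rightarrow> complex mat \<Rightarrow> bool" where
  "unitary_mat d U \<longleftrightarrow> U \<in> carrier_mat d d \<and> U * cadj U = 1\<^sub>m d \<and> cadj U * U = 1\<^sub>m d"

(* Vectors v_1,...,v_d of the paper, indexed 1..d; coordinates are 0-based (k = 0..d-1),
   so coordinate k corresponds to the paper's (k+1)-th entry. *)
definition vv :: "nat \<Rightarrow> nat \<Rightarrow> complex vec" where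
  "vv d j = vec d (\<lambda>k.
     if j = 1 then (if k = 0 then 1 / sqrt 2 else 1 / sqrt (2 * real d - 2))
     else if j = 2 then (if k = 0 then 1 / sqrt 2 else - 1 / sqrt (2 * real d - 2))
     else (if k = 0 then 0
           else omega (d - 1) ^ ((k - 1) * (j - 2)) / complex_of_real (sqrt (real d - 1))))"

definition lam :: "nat \<Rightarrow> nat \<Rightarrow> complex" where
  "lam d j = (if j = 1 then 1 else if j = 2 then -1 else omega (d - 2) ^ (j - 2))"

definition UU :: "nat \<Rightarrow> complex mat" where
  "UU d = mat d d (\<lambda>(a,b). \<Sum>j=1..d. lam d j * (vv d j $ a) * cnj (vv d j $ b))"

end

theory Submission
  imports Defs
begin


lemma omega_pow: "omega n ^ k = exp (2 * pi * \<i> * of_nat k / of_nat n)"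
  unfolding omega_def by (metis exp_of_nat_mult mult.commute times_divide_eq_right mult.assoc)

lemma omega_pow_eq_1: assumes "n > 0" shows "omega n ^ k = 1 \<longleftrightarrow> n dvd k"
proof -
  have "omega n ^ k = 1 \<longleftrightarrow> (\<exists>m::int. 2 * pi * real k / real n = of_int (2*m) * pi)"
    unfolding omega_pow exp_eq_1 by (simp add: Im_divide_of_nat)
  also have "\<dots> \<longleftrightarrow> (\<exists>m::int. real k = of_int m * real n)"
    using assms by (auto simp: field_simps)
  also have "\<dots> \<longleftrightarrow> int n dvd int k"
    unfolding dvd_def by (metis (mono_tags, opaque_lifting) mult.commute of_int_eq_iff of_int_mult of_int_of_nat_eq)
  finally show ?thesis by simp
qed

lemma omega_n: "n > 0 \<Longrightarrow> omega n ^ n = 1"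
  using omega_pow_eq_1 by auto

lemma omega_norm: "norm (omega n) = 1"
  unfolding omega_def by (simp add: norm_exp_eq_Re)

lemma omega_cnj: "cnj (omega n) * omega n = 1"
  by (metis complex_norm_square mult.commute omega_norm of_real_1 power_one)

lemma omega_nz: "omega n \<noteq> 0" unfolding omega_def by simp


lemma geom0: fixes w :: complex assumes "w ^ n = 1" "w \<noteq> 1" shows "(\<Sum>k<n. w ^ k) = 0"
  using assms by (simp add: sum_gp_strict)

lemma omega_diff_ne1:
  assumes "p < n" "q < n" "p \<noteq> q"
  shows "cnj (omega n ^ p) * omega n ^ q \<noteq> 1"
proof
  assume h: "cnj (omega n ^ p) * omega n ^ q = 1"
  have n0: "n > 0" using assms by auto
  have c: "cnj (omega n ^ p) * omega n ^ p = 1"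
    by (metis complex_cnj_power omega_cnj power_mult_distrib power_one)
  have "omega n ^ q = omega n ^ p"
  proof -
    have "omega n ^ q = (cnj (omega n ^ p) * omega n ^ p) * omega n ^ q" using c by simp
    also have "\<dots> = omega n ^ p" using h by (simp add: algebra_simps)
    finally show ?thesis .
  qed
  show False
  proof (cases "p < q")
    case True
    then have "omega n ^ p * omega n ^ (q - p) = omega n ^ p * 1"
      using \<open>omega n ^ q = omega n ^ p\<close> by (simp flip: power_add)
    then have "omega n ^ (q - p) = 1" using omega_nz by simp
    then have "n dvd q - p" using omega_pow_eq_1 n0 by blast
    then show False using True assms by (meson diff_less_mono2 dvd_imp_le less_imp_diff_less not_less zero_less_diff diff_le_self le_less_trans)
  next
    case False
    then have "q < p" using assms by auto
    then have "omega n ^ q * omega n ^ (p - q) = omega n ^ q * 1"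
    proof -
      have "omega n ^ q * omega n ^ (p - q) = omega n ^ p" using \<open>q < p\<close> by (simp flip: power_add)
      then show ?thesis using \<open>omega n ^ q = omega n ^ p\<close> by simp
    qed
    then have "omega n ^ (p - q) = 1" using omega_nz by simp
    then have "n dvd p - q" using omega_pow_eq_1 n0 by blast
    then show False using \<open>q < p\<close> assms by (meson dvd_imp_le less_imp_diff_less not_less zero_less_diff)
  qed
qed

lemma omega_diff_pow_n: "n > 0 \<Longrightarrow> (cnj (omega n ^ p) * omega n ^ q) ^ n = 1"
  by (simp add: power_mult_distrib flip: power_mult complex_cnj_power)
     (simp add: mult.commute[of p] mult.commute[of q] power_mult omega_n)

lemma Gsum:
  assumes "p < n" "q < n"
  shows "(\<Sum>k<n. (cnj (omega n ^ p) * omega n ^ q) ^ k) = (if p = q then of_nat n else 0)"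
proof (cases "p = q")
  case True
  have c: "cnj (omega n ^ p) * omega n ^ p = 1"
    by (metis complex_cnj_power omega_cnj power_mult_distrib power_one)
  then show ?thesis using True by simp
next
  case False
  then show ?thesis using geom0[OF omega_diff_pow_n omega_diff_ne1[OF assms False]] assms by simp
qed


definition al :: "nat \<Rightarrow> nat \<Rightarrow> complex" where
  "al n j = (if j = 1 then of_real (1 / sqrt (2 * real n)) else if j = 2 then of_real (- 1 / sqrt (2 * real n))
            else 1 / of_real (sqrt (real n)))"
definition pp :: "nat \<Rightarrow> nat" where "pp j = (if j \<le> 2 then 0 else j - 2)"
definition be :: "nat \<Rightarrow> complex" where "be j = (if j = 1 \<or> j = 2 then of_real (1 / sqrt 2) else 0)"

lemma vv0: "vv (Suc n) j $ 0 = be j"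
  by (simp add: vv_def be_def)

lemma vvS: "k < n \<Longrightarrow> vv (Suc n) j $ Suc k = al n j * (omega n ^ pp j) ^ k"
proof -
  assume k: "k < n"
  have e: "omega n ^ (k * (j - 2)) = (omega n ^ (j - 2)) ^ k"
    by (simp add: power_mult[symmetric] mult.commute)
  show ?thesis using k unfolding vv_def al_def pp_def
    by (simp add: e divide_inverse)
qed

lemma s0: "complex_of_real (sqrt 2) * complex_of_real (sqrt 2) = 2"
  by (simp flip: of_real_mult)
lemma s2: "complex_of_real (sqrt (2 * real n)) * complex_of_real (sqrt (2 * real n)) = 2 * of_nat n"
  by (simp flip: of_real_mult) (simp add: of_real_mult)
lemma s1: "complex_of_real (sqrt (real n)) * complex_of_real (sqrt (real n)) = of_nat n"
  by (simp flip: of_real_mult)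

lemma pp_lt: "j \<le> Suc n \<Longrightarrow> n \<ge> 1 \<Longrightarrow> pp j < n" by (auto simp: pp_def)

lemma ortho_gen:
  assumes "n \<ge> 1" "j \<le> Suc n" "l \<le> Suc n"
  shows "(\<Sum>c<Suc n. cnj (vv (Suc n) j $ c) * vv (Suc n) l $ c)
     = cnj (be j) * be l + cnj (al n j) * al n l * (if pp j = pp l then of_nat n else 0)"
proof -
  have "(\<Sum>c<Suc n. cnj (vv (Suc n) j $ c) * vv (Suc n) l $ c)
     = cnj (be j) * be l + (\<Sum>k<n. cnj (vv (Suc n) j $ Suc k) * vv (Suc n) l $ Suc k)"
    unfolding sum.lessThan_Suc_shift by (simp add: vv0)
  also have "(\<Sum>k<n. cnj (vv (Suc n) j $ Suc k) * vv (Suc n) l $ Suc k)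
      = (\<Sum>k<n. cnj (al n j) * al n l * (cnj (omega n ^ pp j) * omega n ^ pp l) ^ k)"
    by (rule sum.cong) (auto simp: vvS power_mult_distrib)
  also have "\<dots> = cnj (al n j) * al n l * (\<Sum>k<n. (cnj (omega n ^ pp j) * omega n ^ pp l) ^ k)"
    by (simp add: sum_distrib_left)
  also have "\<dots> = cnj (al n j) * al n l * (if pp j = pp l then of_nat n else 0)"
    using Gsum[OF pp_lt[OF assms(2,1)] pp_lt[OF assms(3,1)]] by simp
  finally show ?thesis .
qed

lemma ortho:
  assumes "n \<ge> 2" "j \<in> {1..Suc n}" "l \<in> {1..Suc n}"
  shows "(\<Sum>c<Suc n. cnj (vv (Suc n) j $ c) * vv (Suc n) l $ c) = (if j = l then 1 else 0)"
proof -
  have s2: "complex_of_real (sqrt (2 * real n)) ^ 2 = 2 * of_nat n"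
    by (metis of_real_mult of_real_numeral of_real_of_nat_eq of_real_power of_nat_0_le_iff real_sqrt_pow2 mult_nonneg_nonneg zero_le_numeral)
  have s2': "complex_of_real (sqrt (real n * 2)) ^ 2 = of_nat n * 2" using s2 by (simp add: mult.commute)
  have s1: "complex_of_real (sqrt (real n)) ^ 2 = of_nat n"
    by (metis of_real_of_nat_eq of_real_power of_nat_0_le_iff real_sqrt_pow2)
  have s0: "complex_of_real (sqrt 2) ^ 2 = 2" by (metis of_real_numeral of_real_power real_sqrt_pow2 zero_le_numeral)
  have np: "complex_of_real (sqrt (2 * real n)) \<noteq> 0" "complex_of_real (sqrt (real n)) \<noteq> 0" "(of_nat n::complex) \<noteq> 0"
    using assms by auto
  show ?thesis
    unfolding ortho_gen[OF _ _ _] using assms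
    apply (subst ortho_gen) 
    using assms apply auto[3]
    using np unfolding al_def be_def pp_def
    by (auto simp: field_simps power2_eq_square[symmetric] s0 s1 s2 s2')
qed


lemma SJ: assumes "n \<ge> 2"
  shows "(\<Sum>j\<in>{1..Suc n}. g j) = g 1 + g 2 + (\<Sum>p\<in>{1..<n}. g (p+2))"
  using assms
proof (induction n rule: dec_induct)
  case base
  then show ?case by (simp add: numeral_eq_Suc)
next
  case (step n)
  have a: "(\<Sum>j\<in>{1..Suc (Suc n)}. g j) = (\<Sum>j\<in>{1..Suc n}. g j) + g (Suc (Suc n))"
    by simp
  have b: "(\<Sum>p\<in>{1..<Suc n}. g (p+2)) = (\<Sum>p\<in>{1..<n}. g (p+2)) + g (n+2)"
    using step by simp
  show ?case unfolding a b step.IH by (simp add: add.assoc)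
qed

lemma S1: "(n::nat) \<ge> 1 \<Longrightarrow> (\<Sum>p<n. f p) = f 0 + (\<Sum>p\<in>{1..<n}. f p)"
proof -
  assume "n \<ge> 1"
  then have "(\<Sum>p<n. f p) = (\<Sum>p\<in>{0..<n}. f p)" by (simp add: lessThan_atLeast0)
  also have "\<dots> = f 0 + (\<Sum>p\<in>{Suc 0..<n}. f p)" using \<open>n \<ge> 1\<close> by (subst sum.atLeast_Suc_lessThan) auto
  finally show ?thesis by simp
qed

lemma E00: assumes "n \<ge> 2"
  shows "(\<Sum>j\<in>{1..Suc n}. mu j * vv (Suc n) j $ 0 * cnj (vv (Suc n) j $ 0)) = (mu 1 + mu 2) / 2"
proof -
  show ?thesis unfolding SJ[OF assms] vv0 be_def using s0
    by (simp add: field_simps)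
qed

lemma E0S: assumes "n \<ge> 2" "m < n"
  shows "(\<Sum>j\<in>{1..Suc n}. mu j * vv (Suc n) j $ 0 * cnj (vv (Suc n) j $ Suc m))
     = (mu 1 - mu 2) / (of_real (sqrt 2) * of_real (sqrt (2 * real n)))"
  unfolding SJ[OF assms(1)] vv0 vvS[OF assms(2)] be_def al_def pp_def
  by (simp add: field_simps) (simp add: diff_divide_distrib)

lemma ES0: assumes "n \<ge> 2" "m < n"
  shows "(\<Sum>j\<in>{1..Suc n}. mu j * vv (Suc n) j $ Suc m * cnj (vv (Suc n) j $ 0))
     = (mu 1 - mu 2) / (of_real (sqrt 2) * of_real (sqrt (2 * real n)))"
  unfolding SJ[OF assms(1)] vv0 vvS[OF assms(2)] be_def al_def pp_def
  by (simp add: field_simps) (simp add: diff_divide_distrib)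

lemma ESS: assumes "n \<ge> 2" "m < n" "k < n"
  shows "(\<Sum>j\<in>{1..Suc n}. mu j * vv (Suc n) j $ Suc k * cnj (vv (Suc n) j $ Suc m))
     = (mu 1 + mu 2) / (2 * of_nat n) + (\<Sum>p\<in>{1..<n}. mu (p+2) * (cnj (omega n ^ m) * omega n ^ k) ^ p) / of_nat n"
proof -
  have np: "complex_of_real (sqrt (2 * real n)) \<noteq> 0" "complex_of_real (sqrt (real n)) \<noteq> 0" "(of_nat n::complex) \<noteq> 0"
    using assms by auto
  have "(\<Sum>p\<in>{1..<n}. mu (p+2) * vv (Suc n) (p+2) $ Suc k * cnj (vv (Suc n) (p+2) $ Suc m))
      = (\<Sum>p\<in>{1..<n}. mu (p+2) * (cnj (omega n ^ m) * omega n ^ k) ^ p / of_nat n)"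
  proof (rule sum.cong)
    fix p assume "p \<in> {1..<n}"
    have E: "(omega n ^ p) ^ k * cnj ((omega n ^ p) ^ m) = (cnj (omega n ^ m) * omega n ^ k) ^ p"
      by (simp add: power_mult_distrib complex_cnj_power flip: power_mult) (simp add: mult.commute)
    show "mu (p+2) * vv (Suc n) (p+2) $ Suc k * cnj (vv (Suc n) (p+2) $ Suc m)
      = mu (p+2) * (cnj (omega n ^ m) * omega n ^ k) ^ p / of_nat n"
    proof -
      have "mu (p+2) * vv (Suc n) (p+2) $ Suc k * cnj (vv (Suc n) (p+2) $ Suc m)
         = mu (p+2) * ((omega n ^ p) ^ k * cnj ((omega n ^ p) ^ m)) / (complex_of_real (sqrt (real n)) * complex_of_real (sqrt (real n)))"
        unfolding vvS[OF assms(3)] vvS[OF assms(2)] al_def pp_def using \<open>p \<in> {1..<n}\<close>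
        by (simp add: divide_inverse mult_ac)
      then show ?thesis using E s1 by simp
    qed
  qed simp
  then show ?thesis
    unfolding SJ[OF assms(1)] vvS[OF assms(2)] vvS[OF assms(3)] using np s2
    by (simp add: al_def pp_def field_simps sum_divide_distrib)
qed


lemma absU1:
  fixes v :: "nat \<Rightarrow> nat \<Rightarrow> complex"
  assumes fin: "finite J" "finite C"
    and mu: "\<And>j. j \<in> J \<Longrightarrow> cnj (mu j) * mu j = 1"
    and orth: "\<And>j l. j \<in> J \<Longrightarrow> l \<in> J \<Longrightarrow> (\<Sum>c\<in>C. cnj (v j c) * v l c) = (if j = l then 1 else 0)"
  shows "(\<Sum>c\<in>C. (\<Sum>j\<in>J. mu j * v j a * cnj (v j c)) * cnj (\<Sum>l\<in>J. mu l * v l b * cnj (v l c)))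
        = (\<Sum>j\<in>J. v j a * cnj (v j b))"
proof -
  have mu': "\<And>j. j \<in> J \<Longrightarrow> mu j * cnj (mu j) = 1" using mu by (simp add: mult.commute)
  have "(\<Sum>c\<in>C. (\<Sum>j\<in>J. mu j * v j a * cnj (v j c)) * cnj (\<Sum>l\<in>J. mu l * v l b * cnj (v l c)))
      = (\<Sum>c\<in>C. \<Sum>l\<in>J. \<Sum>j\<in>J. (mu j * cnj (mu l) * v j a * cnj (v l b)) * (cnj (v j c) * v l c))"
    by (simp add: cnj_sum sum_distrib_left sum_distrib_right mult_ac)
  also have "\<dots> = (\<Sum>l\<in>J. \<Sum>j\<in>J. (mu j * cnj (mu l) * v j a * cnj (v l b)) * (\<Sum>c\<in>C. cnj (v j c) * v l c))"
    by (simp add: sum_distrib_left sum.swap[of _ C])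
  also have "\<dots> = (\<Sum>l\<in>J. \<Sum>j\<in>J. (mu j * cnj (mu l) * v j a * cnj (v l b)) * (if j = l then 1 else 0))"
    by (intro sum.cong refl) (simp add: orth)
  also have "\<dots> = (\<Sum>l\<in>J. mu l * cnj (mu l) * v l a * cnj (v l b))"
    using fin by (simp add: if_distrib sum.delta cong: if_cong)
  also have "\<dots> = (\<Sum>j\<in>J. v j a * cnj (v j b))"
    by (intro sum.cong refl) (simp add: mu' mult.assoc[symmetric])
  finally show ?thesis .
qed

lemma absU2:
  fixes v :: "nat \<Rightarrow> nat \<Rightarrow> complex"
  assumes fin: "finite J" "finite C"
    and mu: "\<And>j. j \<in> J \<Longrightarrow> cnj (mu j) * mu j = 1"
    and orth: "\<And>j l. j \<in> J \<Longrightarrow> l \<in> J \<Longrightarrow> (\<Sum>c\<in>C. cnj (v j c) * v l c) = (if j = l then 1 else 0)"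
  shows "(\<Sum>c\<in>C. cnj (\<Sum>j\<in>J. mu j * v j c * cnj (v j a)) * (\<Sum>l\<in>J. mu l * v l c * cnj (v l b)))
        = (\<Sum>j\<in>J. v j a * cnj (v j b))"
proof -
  have "(\<Sum>c\<in>C. cnj (\<Sum>j\<in>J. mu j * v j c * cnj (v j a)) * (\<Sum>l\<in>J. mu l * v l c * cnj (v l b)))
      = (\<Sum>c\<in>C. \<Sum>j\<in>J. \<Sum>l\<in>J. (cnj (mu j) * mu l * v j a * cnj (v l b)) * (cnj (v j c) * v l c))"
    by (simp add: cnj_sum sum_distrib_left sum_distrib_right mult_ac)
  also have "\<dots> = (\<Sum>j\<in>J. \<Sum>l\<in>J. (cnj (mu j) * mu l * v j a * cnj (v l b)) * (\<Sum>c\<in>C. cnj (v j c) * v l c))"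
    by (simp add: sum_distrib_left sum.swap[of _ C])
  also have "\<dots> = (\<Sum>j\<in>J. \<Sum>l\<in>J. (cnj (mu j) * mu l * v j a * cnj (v l b)) * (if j = l then 1 else 0))"
    by (intro sum.cong refl) (simp add: orth)
  also have "\<dots> = (\<Sum>j\<in>J. cnj (mu j) * mu j * v j a * cnj (v j b))"
    using fin by (simp add: if_distrib sum.delta cong: if_cong)
  also have "\<dots> = (\<Sum>j\<in>J. v j a * cnj (v j b))"
    by (intro sum.cong refl) (simp add: mu)
  finally show ?thesis .
qed





lemma shiftsum: "(\<Sum>p\<in>{1..<Suc N}. (z::complex) ^ p) = z * (\<Sum>p<N. z ^ p)"
  unfolding One_nat_def sum.shift_bounds_Suc_ivl by (simp add: atLeast0LessThan sum_distrib_left)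

lemma geo_nz: assumes "(z::complex) \<noteq> 0" "z ^ N \<noteq> 1" shows "(\<Sum>p\<in>{1..<Suc N}. z ^ p) \<noteq> 0"
proof -
  have "z \<noteq> 1" using assms by auto
  then have "(\<Sum>p<N. z ^ p) = (1 - z ^ N) / (1 - z)" by (simp add: sum_gp_strict)
  then have "(\<Sum>p<N. z ^ p) \<noteq> 0" using assms \<open>z \<noteq> 1\<close> by simp
  then show ?thesis unfolding shiftsum using assms by simp
qed

lemma geo_z: assumes "(z::complex) ^ N = 1" "z \<noteq> 1" shows "(\<Sum>p\<in>{1..<Suc N}. z ^ p) = 0"
  unfolding shiftsum using geom0[OF assms] by simp

lemma cnj_self_pow: "cnj (omega n ^ k) * omega n ^ k = 1"
  by (metis complex_cnj_power omega_cnj power_mult_distrib power_one)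

lemma lam_norm: "cnj (lam d j) * lam d j = 1"
  by (simp add: lam_def omega_cnj flip: power_mult_distrib)

lemma complete:
  assumes "n \<ge> 2" "a < Suc n" "b < Suc n"
  shows "(\<Sum>j\<in>{1..Suc n}. vv (Suc n) j $ a * cnj (vv (Suc n) j $ b)) = (if a = b then 1 else 0)"
proof -
  have np: "(of_nat n::complex) \<noteq> 0" using assms by auto
  show ?thesis
  proof (cases a)
    case 0
    then show ?thesis
    proof (cases b)
      case 0
      then show ?thesis using E00[OF assms(1), of "\<lambda>_. 1"] \<open>a = 0\<close> by simp
    next
      case (Suc m)
      then show ?thesis using E0S[OF assms(1), of m "\<lambda>_. 1"] \<open>a = 0\<close> assms by simp
    qed
  next
    case (Suc k)
    then show ?thesis
    proof (cases b)
      case 0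
      then show ?thesis using ES0[OF assms(1), of k "\<lambda>_. 1"] \<open>a = Suc k\<close> assms by simp
    next
      case (Suc m)
      have k: "k < n" "m < n" using assms \<open>a = Suc k\<close> Suc by auto
      define w where "w = cnj (omega n ^ m) * omega n ^ k"
      have G: "(\<Sum>p<n. w ^ p) = (if m = k then of_nat n else 0)"
        using Gsum[OF k(2) k(1)] unfolding w_def .
      have "(\<Sum>p<n. w ^ p) = 1 + (\<Sum>p\<in>{1..<n}. w ^ p)"
        using S1[of n "\<lambda>p. w ^ p"] assms by simp
      then have H0: "(\<Sum>p\<in>{1..<n}. w ^ p) = (if m = k then of_nat n else 0) - 1"
        using G by (metis add_diff_cancel_left')
      have H: "(\<Sum>p\<in>{1..<n}. (cnj (omega n ^ m) * omega n ^ k) ^ p) = (if m = k then of_nat n else 0) - 1"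
        using H0 unfolding w_def .
      have E: "(\<Sum>j\<in>{1..Suc n}. vv (Suc n) j $ Suc k * cnj (vv (Suc n) j $ Suc m))
          = (1 + 1) / (2 * of_nat n) + ((if m = k then of_nat n else 0) - 1) / of_nat n"
        using ESS[OF assms(1) k(2) k(1), of "\<lambda>_. 1"] unfolding mult_1_left H .
      show ?thesis unfolding \<open>a = Suc k\<close> Suc E using np by (auto simp: field_simps)
    qed
  qed
qed


lemma UU_entry: "a < d \<Longrightarrow> b < d \<Longrightarrow> UU d $$ (a,b) = (\<Sum>j\<in>{1..d}. lam d j * vv d j $ a * cnj (vv d j $ b))"
  by (simp add: UU_def)

lemma UU_dims: "UU d \<in> carrier_mat d d" "dim_row (UU d) = d" "dim_col (UU d) = d"
  by (auto simp: UU_def)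

lemma cadj_entry: "c < dim_col A \<Longrightarrow> b < dim_row A \<Longrightarrow> cadj A $$ (c, b) = cnj (A $$ (b, c))"
  by (simp add: cadj_def)

lemma cadj_dims: "dim_row (cadj A) = dim_col A" "dim_col (cadj A) = dim_row A"
  by (auto simp: cadj_def)

lemma unitary_part:
  assumes "n \<ge> 2"
  shows "UU (Suc n) * cadj (UU (Suc n)) = 1\<^sub>m (Suc n) \<and> cadj (UU (Suc n)) * UU (Suc n) = 1\<^sub>m (Suc n)"
proof -
  let ?d = "Suc n"
  let ?v = "\<lambda>j c. vv ?d j $ c"
  have orth: "\<And>j l. j \<in> {1..?d} \<Longrightarrow> l \<in> {1..?d} \<Longrightarrow> (\<Sum>c\<in>{0..<?d}. cnj (?v j c) * ?v l c) = (if j = l then 1 else 0)"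
    using ortho[OF assms] by (simp add: atLeast0LessThan)
  have mu: "\<And>j. j \<in> {1..?d} \<Longrightarrow> cnj (lam ?d j) * lam ?d j = 1" by (rule lam_norm)
  have A: "UU ?d * cadj (UU ?d) = 1\<^sub>m ?d"
  proof (rule eq_matI)
    fix a b assume ab: "a < dim_row (1\<^sub>m ?d)" "b < dim_col (1\<^sub>m ?d)"
    then have ab': "a < ?d" "b < ?d" by auto
    have "(UU ?d * cadj (UU ?d)) $$ (a, b) = (\<Sum>c\<in>{0..<?d}. UU ?d $$ (a, c) * cnj (UU ?d $$ (b, c)))"
      using ab' by (simp add: UU_dims cadj_dims scalar_prod_def cadj_entry)
    also have "\<dots> = (\<Sum>c\<in>{0..<?d}. (\<Sum>j\<in>{1..?d}. lam ?d j * ?v j a * cnj (?v j c)) * cnj (\<Sum>l\<in>{1..?d}. lam ?d l * ?v l b * cnj (?v l c)))"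
      using ab' by (intro sum.cong refl) (simp add: UU_entry)
    also have "\<dots> = (\<Sum>j\<in>{1..?d}. ?v j a * cnj (?v j b))"
      by (rule absU1[OF _ _ mu orth]) auto
    also have "\<dots> = 1\<^sub>m ?d $$ (a, b)"
      using complete[OF assms ab'] ab' by simp
    finally show "(UU ?d * cadj (UU ?d)) $$ (a, b) = 1\<^sub>m ?d $$ (a, b)" .
  qed (auto simp: UU_dims cadj_dims)
  have B: "cadj (UU ?d) * UU ?d = 1\<^sub>m ?d"
  proof (rule eq_matI)
    fix a b assume ab: "a < dim_row (1\<^sub>m ?d)" "b < dim_col (1\<^sub>m ?d)"
    then have ab': "a < ?d" "b < ?d" by auto
    have "(cadj (UU ?d) * UU ?d) $$ (a, b) = (\<Sum>c\<in>{0..<?d}. cnj (UU ?d $$ (c, a)) * UU ?d $$ (c, b))"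
      using ab' by (simp add: UU_dims cadj_dims scalar_prod_def cadj_entry)
    also have "\<dots> = (\<Sum>c\<in>{0..<?d}. cnj (\<Sum>j\<in>{1..?d}. lam ?d j * ?v j c * cnj (?v j a)) * (\<Sum>l\<in>{1..?d}. lam ?d l * ?v l c * cnj (?v l b)))"
      using ab' by (intro sum.cong refl) (simp add: UU_entry)
    also have "\<dots> = (\<Sum>j\<in>{1..?d}. ?v j a * cnj (?v j b))"
      by (rule absU2[OF _ _ mu orth]) auto
    also have "\<dots> = 1\<^sub>m ?d $$ (a, b)"
      using complete[OF assms ab'] ab' by simp
    finally show "(cadj (UU ?d) * UU ?d) $$ (a, b) = 1\<^sub>m ?d $$ (a, b)" .
  qed (auto simp: UU_dims cadj_dims)
  show ?thesis using A B by simp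
qed


lemma lam_shift: "p \<ge> 1 \<Longrightarrow> lam (Suc (Suc N)) (p + 2) = omega N ^ p"
  by (simp add: lam_def)

lemma lam12: "lam d 1 = 1" "lam d 2 = -1" "lam d (Suc 0) = 1" by (simp_all add: lam_def)

lemma sum_lam: "(\<Sum>p\<in>{1..<Suc N}. lam (Suc (Suc N)) (p + 2) * w ^ p) = (\<Sum>p\<in>{1..<Suc N}. (omega N * w) ^ p)"
proof (rule sum.cong)
  fix p assume "p \<in> {1..<Suc N}"
  then have "lam (Suc (Suc N)) (p + 2) = omega N ^ p" by (intro lam_shift) auto
  then show "lam (Suc (Suc N)) (p + 2) * w ^ p = (omega N * w) ^ p" by (simp add: power_mult_distrib)
qed simp

lemma diag_part:
  assumes "N \<ge> 2" "a < Suc (Suc N)"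
  shows "UU (Suc (Suc N)) $$ (a, a) = 0"
proof -
  let ?n = "Suc N"
  have n2: "?n \<ge> 2" using assms by auto
  show ?thesis
  proof (cases a)
    case 0
    have "UU (Suc ?n) $$ (0, 0) = (lam (Suc ?n) 1 + lam (Suc ?n) 2) / 2"
      unfolding UU_entry[of 0 "Suc ?n" 0, OF zero_less_Suc zero_less_Suc] by (rule E00[OF n2])
    then show ?thesis using 0 by (simp add: lam12)
  next
    case (Suc k)
    have k: "k < ?n" using assms Suc by auto
    have z1: "omega N ^ N = 1" using omega_n assms by auto
    have z2: "omega N \<noteq> 1" using omega_pow_eq_1[of N 1] assms by auto
    have S: "(\<Sum>p\<in>{1..<?n}. lam (Suc ?n) (p + 2) * (cnj (omega ?n ^ k) * omega ?n ^ k) ^ p) = 0"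
      unfolding cnj_self_pow power_one mult_1_right sum_lam[of N 1, unfolded power_one mult_1_right]
      using geo_z[OF z1 z2] by simp
    have "UU (Suc ?n) $$ (a, a) = (\<Sum>j\<in>{1..Suc ?n}. lam (Suc ?n) j * vv (Suc ?n) j $ a * cnj (vv (Suc ?n) j $ a))"
      by (rule UU_entry[OF assms(2,2)])
    also have "\<dots> = (lam (Suc ?n) 1 + lam (Suc ?n) 2) / (2 * of_nat ?n) + (\<Sum>p\<in>{1..<?n}. lam (Suc ?n) (p + 2) * (cnj (omega ?n ^ k) * omega ?n ^ k) ^ p) / of_nat ?n"
      unfolding Suc by (rule ESS[OF n2 k k])
    also have "\<dots> = 0" unfolding S by (simp add: lam12)
    finally show ?thesis .
  qed
qed

lemma offdiag_part:
  assumes "N \<ge> 2" "a < Suc (Suc N)" "b < Suc (Suc N)" "a \<noteq> b"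
  shows "UU (Suc (Suc N)) $$ (a, b) \<noteq> 0"
proof -
  let ?n = "Suc N"
  have n2: "?n \<ge> 2" using assms by auto
  have np: "complex_of_real (sqrt 2) \<noteq> 0" "complex_of_real (sqrt (2 * real ?n)) \<noteq> 0" by auto
  show ?thesis
  proof (cases a)
    case 0
    then obtain m where m: "b = Suc m" using assms by (cases b) auto
    then have "m < ?n" using assms by auto
    have "UU (Suc ?n) $$ (a, b) = (\<Sum>j\<in>{1..Suc ?n}. lam (Suc ?n) j * vv (Suc ?n) j $ a * cnj (vv (Suc ?n) j $ b))"
      by (rule UU_entry[OF assms(2,3)])
    also have "\<dots> = (lam (Suc ?n) 1 - lam (Suc ?n) 2) / (complex_of_real (sqrt 2) * complex_of_real (sqrt (2 * real ?n)))"
      unfolding 0 m by (rule E0S[OF n2 \<open>m < ?n\<close>])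
    finally have "UU (Suc ?n) $$ (a, b) = (lam (Suc ?n) 1 - lam (Suc ?n) 2) / (complex_of_real (sqrt 2) * complex_of_real (sqrt (2 * real ?n)))" .
    then show ?thesis using np by (simp add: lam12)
  next
    case (Suc k)
    have k: "k < ?n" using assms Suc by auto
    show ?thesis
    proof (cases b)
      case 0
      have "UU (Suc ?n) $$ (a, b) = (\<Sum>j\<in>{1..Suc ?n}. lam (Suc ?n) j * vv (Suc ?n) j $ a * cnj (vv (Suc ?n) j $ b))"
        by (rule UU_entry[OF assms(2,3)])
      also have "\<dots> = (lam (Suc ?n) 1 - lam (Suc ?n) 2) / (complex_of_real (sqrt 2) * complex_of_real (sqrt (2 * real ?n)))"
        unfolding 0 \<open>a = Suc k\<close> by (rule ES0[OF n2 k])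
      finally have "UU (Suc ?n) $$ (a, b) = (lam (Suc ?n) 1 - lam (Suc ?n) 2) / (complex_of_real (sqrt 2) * complex_of_real (sqrt (2 * real ?n)))" .
      then show ?thesis using np by (simp add: lam12)
    next
      case (Suc m)
      have m: "m < ?n" "m \<noteq> k" using assms Suc \<open>a = Suc k\<close> by auto
      define w where "w = cnj (omega ?n ^ m) * omega ?n ^ k"
      have w1: "w \<noteq> 1" unfolding w_def using omega_diff_ne1[OF m(1) k m(2)] .
      have wn: "w ^ ?n = 1" unfolding w_def by (rule omega_diff_pow_n) simp
      have wN: "w ^ N \<noteq> 1"
      proof
        assume h: "w ^ N = 1"
        have "w ^ ?n = w * w ^ N" by simp
        then show False using wn w1 h by simp
      qed
      define z where "z = omega N * w"
      have zN: "z ^ N \<noteq> 1" unfolding z_def power_mult_distrib using omega_n[of N] assms wN by simp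
      have w0: "w \<noteq> 0" proof assume "w = 0" then show False using wn by simp qed
      have z0: "z \<noteq> 0" unfolding z_def using omega_nz w0 by simp
      have S: "(\<Sum>p\<in>{1..<?n}. lam (Suc ?n) (p + 2) * w ^ p) \<noteq> 0"
        unfolding sum_lam z_def[symmetric] using geo_nz[OF z0 zN] .
      have E: "UU (Suc ?n) $$ (a, b) = (\<Sum>p\<in>{1..<?n}. lam (Suc ?n) (p + 2) * w ^ p) / of_nat ?n"
      proof -
        have "UU (Suc ?n) $$ (a, b) = (\<Sum>j\<in>{1..Suc ?n}. lam (Suc ?n) j * vv (Suc ?n) j $ a * cnj (vv (Suc ?n) j $ b))"
          by (rule UU_entry[OF assms(2,3)])
        also have "\<dots> = (lam (Suc ?n) 1 + lam (Suc ?n) 2) / (2 * of_nat ?n) + (\<Sum>p\<in>{1..<?n}. lam (Suc ?n) (p + 2) * (cnj (omega ?n ^ m) * omega ?n ^ k) ^ p) / of_nat ?n"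
          unfolding \<open>a = Suc k\<close> Suc by (rule ESS[OF n2 m(1) k])
        finally show ?thesis unfolding w_def by (simp add: lam12)
      qed
      show ?thesis using E S of_nat_neq_0[of N, where ?'a=complex] by (simp only: divide_eq_0_iff de_Morgan_disj) simp
    qed
  qed
qed


theorem mainTheorem7:
  fixes d :: nat
  assumes "d \<ge> 4"
  shows "unitary_mat d (UU d)
    \<and> (\<forall>a<d. UU d $$ (a,a) = 0)
    \<and> (\<forall>a<d. \<forall>b<d. a \<noteq> b \<longrightarrow> UU d $$ (a,b) \<noteq> 0)"
proof -
  obtain N where d: "d = Suc (Suc N)" and N: "N \<ge> 2"
  proof
    show "d = Suc (Suc (d - 2))" using assms by simp
    show "d - 2 \<ge> 2" using assms by simp
  qed
  have n2: "Suc N \<ge> 2" using N by simp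
  have U: "unitary_mat d (UU d)"
    unfolding unitary_mat_def d using unitary_part[OF n2] UU_dims by simp
  have D: "\<forall>a<d. UU d $$ (a,a) = 0" using diag_part[OF N] d by simp
  have O: "\<forall>a<d. \<forall>b<d. a \<noteq> b \<longrightarrow> UU d $$ (a,b) \<noteq> 0" using offdiag_part[OF N] d by simp
  show ?thesis using U D O by blast
qed

end
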